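(* For $0<\Delta<2$ let $\gamma_1(\theta)=(\cos\theta,\sin\theta,0)$ and $\gamma_2(\phi)=(\cos\phi+\Delta,0,\sin\phi)$, $\theta,\phi\in[0,2\pi)$; these two unit circles form a Hopf link. Their Möbius cross-energy $$E_c(\Delta)=2\int_0^{2\pi}\!\!\int_0^{2\pi}\frac{d\theta\,d\phi}{(\cos\theta+\Delta-\cos\phi)^2+\sin^2\phi+\sin^2\theta}$$ satisfies $$E_c(\Delta)=\frac{16\pi}{4-\Delta^2}\,K\!\left(-\frac{8(\Delta^2-2)}{(\Delta^2-4)^2}\right),$$ where $K(m)=\int_0^{\pi/2}(1-m\sin^2 t)^{-1/2}\,dt$ (the argument is $<1$ for all $\Delta\in(0,2)$). Moreover, $E_c$ attains its minimum over $(0,2)$ at $\Delta=\sqrt2$, with $E_c(\sqrt2)=4\pi^2$.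
   Context: The Möbius cross-energy of two disjoint closed curves $\gamma_i,\gamma_j$ in $\mathbb R^3$ is taken with the convention that each pair of line elements is counted twice: $E_c=2\int\int \frac{|\dot\gamma_i(u)||\dot\gamma_j(v)|}{|\gamma_i(u)-\gamma_j(v)|^2}\,du\,dv$. The integral displayed in the claim is this quantity for the two curves given. *)

theory Defs
  imports "HOL-Analysis.Analysis"
begin

definition ellipK :: "real \<Rightarrow> real" where
  "ellipK m = integral {0..pi/2} (\<lambda>t. 1 / sqrt (1 - m * (sin t)\<^sup>2))"

definition hopf_integrand :: "real \<Rightarrow> real \<times> real \<Rightarrow> real" where
  "hopf_integrand D = (\<lambda>(\<theta>, \<phi>).
     1 / ((cos \<theta> + D - cos \<phi>)\<^sup>2 + (sin \<phi>)\<^sup>2 + (sin \<theta>)\<^sup>2))"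

definition cross_energy :: "real \<Rightarrow> real" where
  "cross_energy D = 2 * integral ({0..2*pi} \<times> {0..2*pi}) (hopf_integrand D)"

end

theory Submission
  imports Defs
begin

lemma gen1: "Y \<noteq> 0 \<Longrightarrow> inverse (X/Y) * (Z/Y) = Z/(X::real)"
  by (simp add: inverse_eq_divide)

lemma gen2: "X * Y = Z \<Longrightarrow> Y \<noteq> 0 \<Longrightarrow> Z \<noteq> 0 \<Longrightarrow> X / Z = 1 / (Y::real)"
  by (auto simp: field_simps)

lemma keyalg:
  fixes A B r w c :: real
  assumes h1: "B = r * (A+w)" and h2: "w * w = A * A - B * B" and nz: "A+w \<noteq> 0"
  shows "(1-r\<^sup>2) * (A - B * c) = w * (1 - 2 * r * c + r\<^sup>2)"
proof -
  have "(A+w)\<^sup>2 * ((1-r\<^sup>2) * (A - B * c)) = ((A+w)\<^sup>2 - (r * (A+w))\<^sup>2) * (A-B * c)" by (simp add: algebra_simps power2_eq_square)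
  also have "\<dots> = ((A+w)\<^sup>2 - B\<^sup>2) * (A-B * c)" by (simp only: h1)
  also have "\<dots> = (A * A + 2 * A * w + w * w - B * B) * (A-B * c)" by (simp add: algebra_simps power2_eq_square)
  also have "\<dots> = (A * A + 2 * A * w + (A * A - B * B) - B * B) * (A-B * c)" by (simp only: h2)
  also have "\<dots> = 2 * w * (A+w) * (A-B * c) + 2 * (A * A - B * B - w * w) * (A-B * c)" by (simp add: algebra_simps)
  also have "\<dots> = 2 * w * (A+w) * (A-B * c)" by (simp add: h2)
  finally have L: "(A+w)\<^sup>2 * ((1-r\<^sup>2) * (A - B * c)) = 2 * w * (A+w) * (A-B * c)" .
  have "(A+w)\<^sup>2 * (w * (1 - 2 * r * c + r\<^sup>2)) = w * ((A+w)\<^sup>2 - 2 * (r * (A+w)) * (A+w) * c + (r * (A+w))\<^sup>2)" by (simp add: algebra_simps power2_eq_square)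
  also have "\<dots> = w * ((A+w)\<^sup>2 - 2 * B * (A+w) * c + B\<^sup>2)" by (simp only: h1)
  also have "\<dots> = w * (A * A + 2 * A * w + w * w + B * B - 2 * B * (A+w) * c)" by (simp add: algebra_simps power2_eq_square)
  also have "\<dots> = w * (A * A + 2 * A * w + (A * A - B * B) + B * B - 2 * B * (A+w) * c)" by (simp only: h2)
  also have "\<dots> = 2 * w * (A+w) * (A-B * c)" by (simp add: algebra_simps)
  finally have R: "(A+w)\<^sup>2 * (w * (1 - 2 * r * c + r\<^sup>2)) = 2 * w * (A+w) * (A-B * c)" .
  have "(A+w)\<^sup>2 * ((1-r\<^sup>2) * (A - B * c)) = (A+w)\<^sup>2 * (w * (1 - 2 * r * c + r\<^sup>2))" using L R by (simp only:)
  then show ?thesis using nz by simp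
qed

lemma poisson:
  fixes A B :: real assumes AB: "\<bar>B\<bar> < A"
  shows "((\<lambda>x. 1/(A - B * cos x)) has_integral 2 * pi/sqrt(A\<^sup>2-B\<^sup>2)) {0..2 * pi}"
proof -
  define w where "w = sqrt(A\<^sup>2-B\<^sup>2)"
  have A2: "B\<^sup>2 < A\<^sup>2" using AB power_strict_mono[of "\<bar>B\<bar>" A 2] by simp
  have s0: "w > 0" using A2 unfolding w_def by simp
  have ss: "w\<^sup>2 = A\<^sup>2 - B\<^sup>2" unfolding w_def using A2 by simp
  define r where "r = B/(A+w)"
  have As: "A + w > 0" using AB s0 by linarith
  have r1: "\<bar>r\<bar> < 1" unfolding r_def using AB s0 by (simp add: abs_divide divide_less_eq) arith
  have den: "1 - r * cos x > 0" for x
  proof -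
    have "\<bar>r * cos x\<bar> \<le> \<bar>r\<bar>" by (simp add: abs_mult mult_left_le)
    then show ?thesis using r1 by linarith
  qed
  have key: "(1-r\<^sup>2) * (A - B * c) = w * (1 - 2 * r * c + r\<^sup>2)" for c
  proof (rule keyalg)
    show "B = r * (A+w)" unfolding r_def using As by simp
    show "w * w = A * A - B * B" using ss by (simp add: power2_eq_square)
    show "A + w \<noteq> 0" using As by simp
  qed
  have ABc: "A - B * cos x > 0" for x
  proof -
    have "\<bar>B * cos x\<bar> \<le> \<bar>B\<bar>" by (simp add: abs_mult mult_left_le)
    then show ?thesis using AB by linarith
  qed
  define F where "F x = (x + 2 * arctan (r * sin x / (1 - r * cos x))) / w" for x
  have d: "(F has_real_derivative 1/(A-B * cos x)) (at x)" for x
  proof -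
    have n0: "1 - r * cos x \<noteq> 0" using den[of x] by simp
    have q: "1 - 2 * r * cos x + r\<^sup>2 > 0"
    proof -
      have "r * cos x \<le> \<bar>r\<bar>" by (metis abs_ge_self abs_mult abs_cos_le_one mult_left_le order_trans abs_ge_zero)
      moreover have "(1-\<bar>r\<bar>)\<^sup>2 > 0" using r1 by simp
      moreover have "(1-\<bar>r\<bar>)\<^sup>2 = 1 - 2 * \<bar>r\<bar> + r\<^sup>2" by (simp add: power2_eq_square algebra_simps)
      ultimately show ?thesis by linarith
    qed
    have d1: "((\<lambda>x. r * sin x/(1-r * cos x)) has_real_derivative (r * cos x - r\<^sup>2)/(1-r * cos x)\<^sup>2) (at x)"
    proof -
      have "((\<lambda>x. r * sin x/(1-r * cos x)) has_real_derivative
          ((r * cos x) * (1-r * cos x) - (r * sin x) * (r * sin x))/(1-r * cos x)\<^sup>2) (at x)"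
        using n0 by (auto intro!: derivative_eq_intros simp: power2_eq_square)
      moreover have "(r * cos x) * (1-r * cos x) - (r * sin x) * (r * sin x) = r * cos x - r\<^sup>2"
      proof -
        have "(r * cos x) * (1-r * cos x) - (r * sin x) * (r * sin x) = r * cos x - r\<^sup>2 * ((sin x)\<^sup>2 + (cos x)\<^sup>2)"
          by algebra
        then show ?thesis by simp
      qed

      ultimately show ?thesis by simp
    qed
    have d2: "((\<lambda>x. arctan(r * sin x/(1-r * cos x))) has_real_derivative
        inverse (1 + (r * sin x/(1-r * cos x))\<^sup>2) * ((r * cos x - r\<^sup>2)/(1-r * cos x)\<^sup>2)) (at x)"
      by (rule DERIV_chain2[OF DERIV_arctan d1])
    have e1: "1 + (r * sin x/(1-r * cos x))\<^sup>2 = (1 - 2 * r * cos x + r\<^sup>2)/(1-r * cos x)\<^sup>2"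
    proof -
      have "(1-r * cos x)\<^sup>2 + (r * sin x)\<^sup>2 = 1 - 2 * r * cos x + r\<^sup>2 * ((sin x)\<^sup>2 + (cos x)\<^sup>2)"
        by algebra
      also have "\<dots> = 1 - 2 * r * cos x + r\<^sup>2" by simp
      finally have h: "(1-r * cos x)\<^sup>2 + (r * sin x)\<^sup>2 = 1 - 2 * r * cos x + r\<^sup>2" .
      have "1 + (r * sin x/(1-r * cos x))\<^sup>2 = ((1-r * cos x)\<^sup>2 + (r * sin x)\<^sup>2)/(1-r * cos x)\<^sup>2"
        using n0 by (simp add: power_divide field_simps)
      then show ?thesis using h by simp
    qed
    have e2: "inverse (1 + (r * sin x/(1-r * cos x))\<^sup>2) * ((r * cos x - r\<^sup>2)/(1-r * cos x)\<^sup>2)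
        = (r * cos x - r\<^sup>2)/(1 - 2 * r * cos x + r\<^sup>2)"
      unfolding e1 using n0 by (intro gen1) simp
    have d3: "(F has_real_derivative (1 + 2 * ((r * cos x - r\<^sup>2)/(1 - 2 * r * cos x + r\<^sup>2)))/w) (at x)"
      unfolding F_def
      by (intro DERIV_cdivide DERIV_add DERIV_cmult DERIV_ident d2[unfolded e2])
    have "(1 + 2 * ((r * cos x - r\<^sup>2)/(1 - 2 * r * cos x + r\<^sup>2)))/w = (1-r\<^sup>2)/(w * (1 - 2 * r * cos x + r\<^sup>2))"
      using q s0 by (simp add: field_simps)
    also have "\<dots> = 1/(A-B * cos x)"
      using key[of "cos x"] q s0 ABc[of x] by (intro gen2) auto
    finally show ?thesis using d3 by simp
  qed
  have "((\<lambda>x. 1/(A - B * cos x)) has_integral (F (2 * pi) - F 0)) {0..2 * pi}"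
    apply (rule fundamental_theorem_of_calculus)
     apply simp
    using d by (simp add: has_real_derivative_iff_has_vector_derivative has_vector_derivative_at_within)
  moreover have "F (2 * pi) - F 0 = 2 * pi/w" unfolding F_def by simp
  ultimately show ?thesis unfolding w_def by simp
qed

lemma period_half:
  fixes G :: "real \<Rightarrow> real"
  assumes G: "continuous_on {-1..1} G"
  shows "integral {0..2 * pi} (\<lambda>t. G (cos t)) = 2 * integral {0..pi} (\<lambda>t. G (cos t))"
proof -
  have c: "continuous_on UNIV (\<lambda>t. G (cos t))"
    by (intro continuous_on_compose2[OF G] continuous_intros) auto
  have int: "(\<lambda>t. G (cos t)) integrable_on {0..2 * pi}"
    by (rule integrable_continuous_interval) (rule continuous_on_subset[OF c], simp)
  have "integral {0..pi} (\<lambda>t. G (cos t)) + integral {pi..2 * pi} (\<lambda>t. G (cos t)) = integral {0..2 * pi} (\<lambda>t. G (cos t))"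
    by (rule Henstock_Kurzweil_Integration.integral_combine) (use int in auto)
  moreover have "integral {pi..2 * pi} (\<lambda>t. G (cos t)) = integral {-pi..0} (\<lambda>t. G (cos t))"
  proof -
    have "integral {pi - 2 * pi..2 * pi - 2 * pi} (\<lambda>x. G (cos (x + 2 * pi))) = integral {pi..2 * pi} (\<lambda>t. G (cos t))"
      by (rule integral_shift_real_ivl)
    moreover have "{pi - 2 * pi..2 * pi - 2 * pi} = {-pi..0}" by simp
    moreover have "(\<lambda>x. G (cos (x + 2 * pi))) = (\<lambda>t. G (cos t))" by simp
    ultimately show ?thesis by simp
  qed
  moreover have "integral {-pi..0} (\<lambda>t. G (cos t)) = integral {0..pi} (\<lambda>t. G (cos t))"
  proof -
    have "integral {-pi..-0} (\<lambda>x. G (cos (-x))) = integral {0..pi} (\<lambda>t. G (cos t))"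
      by (rule Henstock_Kurzweil_Integration.integral_reflect_real)
    then show ?thesis by simp
  qed
  ultimately show ?thesis by simp
qed

lemma even_half:
  fixes f :: "real \<Rightarrow> real"
  assumes f: "continuous_on {-a..a} f" and ev: "\<And>x. f (-x) = f x" and a: "a \<ge> 0"
  shows "integral {-a..a} f = 2 * integral {0..a} f"
proof -
  have int: "f integrable_on {-a..a}" by (rule integrable_continuous_interval[OF f])
  have "integral {-a..0} f + integral {0..a} f = integral {-a..a} f"
    by (rule Henstock_Kurzweil_Integration.integral_combine) (use int a in auto)
  moreover have "integral {-a..0} f = integral {0..a} f"
  proof -
    have "integral {-a..-0} (\<lambda>x. f (-x)) = integral {0..a} f"
      by (rule Henstock_Kurzweil_Integration.integral_reflect_real)
    then show ?thesis using ev by simp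
  qed
  ultimately show ?thesis by simp
qed

definition P1 :: "real \<Rightarrow> real \<Rightarrow> real" where "P1 D c = 2 * c * (D - 1) + D\<^sup>2 - 2 * D + 2"
definition P2 :: "real \<Rightarrow> real \<Rightarrow> real" where "P2 D c = 2 * c * (D + 1) + D\<^sup>2 + 2 * D + 2"
definition Hf :: "real \<Rightarrow> real \<Rightarrow> real" where "Hf D u = 1 / sqrt (P1 D u * P2 D u)"

lemma P1_pos:
  assumes "0 < D" "D < 2" "-1 \<le> c" "c \<le> 1"
  shows "P1 D c > 0"
proof -
  have e: "2 * P1 D c = (1 + c) * D\<^sup>2 + (1 - c) * (D - 2)\<^sup>2"
    unfolding P1_def by algebra
  have a: "D\<^sup>2 > 0" "(D - 2)\<^sup>2 > 0" using assms by auto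
  show ?thesis
  proof (cases "c \<ge> 0")
    case True
    have "(1 + c) * D\<^sup>2 \<ge> D\<^sup>2" using True a mult_nonneg_nonneg[of c "D\<^sup>2"] by (simp add: algebra_simps)
    moreover have "(1 - c) * (D - 2)\<^sup>2 \<ge> 0" using assms by simp
    ultimately show ?thesis using e a by linarith
  next
    case False
    have "(1 - c) * (D - 2)\<^sup>2 \<ge> (D - 2)\<^sup>2" using False a mult_nonpos_nonneg[of c "(D - 2)\<^sup>2"] by (simp add: algebra_simps)
    moreover have "(1 + c) * D\<^sup>2 \<ge> 0" using assms by simp
    ultimately show ?thesis using e a by linarith
  qed
qed

lemma P2_pos:
  assumes "0 < D" "D < 2" "-1 \<le> c" "c \<le> 1"
  shows "P2 D c > 0"
proof -
  have e: "2 * P2 D c = (1 + c) * (D + 2)\<^sup>2 + (1 - c) * D\<^sup>2"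
    unfolding P2_def by algebra
  have a: "D\<^sup>2 > 0" "(D + 2)\<^sup>2 > 0" using assms by auto
  show ?thesis
  proof (cases "c \<ge> 0")
    case True
    have "(1 + c) * (D + 2)\<^sup>2 \<ge> (D + 2)\<^sup>2" using True a mult_nonneg_nonneg[of c "(D + 2)\<^sup>2"] by (simp add: algebra_simps)
    moreover have "(1 - c) * D\<^sup>2 \<ge> 0" using assms by simp
    ultimately show ?thesis using e a by linarith
  next
    case False
    have "(1 - c) * D\<^sup>2 \<ge> D\<^sup>2" using False a mult_nonpos_nonneg[of c "D\<^sup>2"] by (simp add: algebra_simps)
    moreover have "(1 + c) * (D + 2)\<^sup>2 \<ge> 0" using assms by simp
    ultimately show ?thesis using e a by linarith
  qed
qed

lemma den_eq:
  "(cos t + D - cos f)\<^sup>2 + (sin f)\<^sup>2 + (sin t)\<^sup>2 = (2 * D * cos t + D\<^sup>2 + 2) - (2 * (cos t + (D::real))) * cos f"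
proof -
  have "(cos t + D - cos f)\<^sup>2 + (sin f)\<^sup>2 + (sin t)\<^sup>2 = (2 * D * cos t + D\<^sup>2 + 2) - (2 * (cos t + D)) * cos f
     + ((sin f)\<^sup>2 + (cos f)\<^sup>2 - 1) + ((sin t)\<^sup>2 + (cos t)\<^sup>2 - 1)"
    by algebra
  then show ?thesis by simp
qed

lemma AB_facts:
  assumes "0 < D" "D < 2" "-1 \<le> c" "c \<le> 1"
  shows "\<bar>2 * (c + D)\<bar> < 2 * D * c + D\<^sup>2 + 2"
    and "(2 * D * c + D\<^sup>2 + 2)\<^sup>2 - (2 * (c + D))\<^sup>2 = P1 D c * P2 D c"
proof -
  show e: "(2 * D * c + D\<^sup>2 + 2)\<^sup>2 - (2 * (c + D))\<^sup>2 = P1 D c * P2 D c"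
    unfolding P1_def P2_def by algebra
  have pp: "P1 D c * P2 D c > 0" using P1_pos[OF assms] P2_pos[OF assms] by simp
  have A0: "2 * D * c + D\<^sup>2 + 2 > 0"
  proof -
    have "D * (-1) \<le> D * c" using assms by (intro mult_left_mono) auto
    moreover have "(D - 1)\<^sup>2 \<ge> 0" by simp
    moreover have "(D - 1)\<^sup>2 = D\<^sup>2 - 2 * D + 1" by (simp add: power2_eq_square algebra_simps)
    ultimately show ?thesis by linarith
  qed
  have "(2 * (c + D))\<^sup>2 < (2 * D * c + D\<^sup>2 + 2)\<^sup>2" using e pp by linarith
  then show "\<bar>2 * (c + D)\<bar> < 2 * D * c + D\<^sup>2 + 2"
    using A0 by (metis abs_le_square_iff abs_of_pos not_le)
qed

lemma den_pos:
  fixes D t f :: real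
  assumes "0 < D" "D < 2"
  shows "(cos t + D - cos f)\<^sup>2 + (sin f)\<^sup>2 + (sin t)\<^sup>2 > 0"
proof -
  have "\<bar>2 * (cos t + D) * cos f\<bar> \<le> \<bar>2 * (cos t + D)\<bar>"
    by (simp add: abs_mult mult_left_le)
  moreover have "\<bar>2 * (cos t + D)\<bar> < 2 * D * cos t + D\<^sup>2 + 2"
    using AB_facts(1)[OF assms, of "cos t"] by simp
  ultimately show ?thesis unfolding den_eq by linarith
qed

lemma hopf_alt: "hopf_integrand D z = 1 / ((cos (fst z) + D - cos (snd z))\<^sup>2 + (sin (snd z))\<^sup>2 + (sin (fst z))\<^sup>2)"
  by (cases z) (simp add: hopf_integrand_def)

lemma hopf_cont:
  assumes "0 < D" "D < 2"
  shows "continuous_on UNIV (hopf_integrand D)"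
proof -
  have "continuous_on UNIV (\<lambda>z. 1 / ((cos (fst z) + D - cos (snd z))\<^sup>2 + (sin (snd z))\<^sup>2 + (sin (fst z))\<^sup>2))"
    using den_pos[OF assms] by (intro continuous_intros) (metis less_irrefl)
  then show ?thesis by (simp add: hopf_alt[abs_def])
qed

lemma inner_int:
  assumes D: "0 < D" "D < 2"
  shows "integral {0..2 * pi} (\<lambda>f. hopf_integrand D (t, f)) = 2 * pi * Hf D (cos t)"
proof -
  have c: "-1 \<le> cos t" "cos t \<le> 1" by auto
  have "((\<lambda>x. 1 / ((2 * D * cos t + D\<^sup>2 + 2) - (2 * (cos t + D)) * cos x)) has_integral
        2 * pi / sqrt ((2 * D * cos t + D\<^sup>2 + 2)\<^sup>2 - (2 * (cos t + D))\<^sup>2)) {0..2 * pi}"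
    by (rule poisson) (rule AB_facts(1)[OF D c])
  then have "((\<lambda>f. hopf_integrand D (t, f)) has_integral 2 * pi / sqrt (P1 D (cos t) * P2 D (cos t))) {0..2 * pi}"
    unfolding AB_facts(2)[OF D c] by (simp add: hopf_integrand_def den_eq)
  then show ?thesis unfolding Hf_def by (simp add: integral_unique)
qed

lemma cross_energy_H:
  assumes D: "0 < D" "D < 2"
  shows "hopf_integrand D integrable_on ({0..2*pi} \<times> {0..2*pi})"
    and "cross_energy D = 8 * pi * integral {0..pi} (\<lambda>t. Hf D (cos t))"
proof -
  have box: "cbox (0::real, 0::real) (2 * pi, 2 * pi) = {0..2*pi} \<times> {0..2*pi}"
    by (simp add: cbox_Pair_eq)
  have cc: "continuous_on (cbox (0::real, 0::real) (2 * pi, 2 * pi)) (hopf_integrand D)"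
    using hopf_cont[OF D] by (rule continuous_on_subset) simp
  show "hopf_integrand D integrable_on ({0..2*pi} \<times> {0..2*pi})"
    using integrable_continuous[OF cc] box by simp
  have "integral ({0..2*pi} \<times> {0..2*pi}) (hopf_integrand D)
      = integral {0..2*pi} (\<lambda>t. integral {0..2*pi} (\<lambda>f. hopf_integrand D (t, f)))"
    using integral_prod_continuous[OF cc] box by simp
  also have "\<dots> = integral {0..2*pi} (\<lambda>t. 2 * pi * Hf D (cos t))"
    using inner_int[OF D] by simp
  also have "\<dots> = 2 * pi * integral {0..2*pi} (\<lambda>t. Hf D (cos t))"
    by simp
  also have "integral {0..2*pi} (\<lambda>t. Hf D (cos t)) = 2 * integral {0..pi} (\<lambda>t. Hf D (cos t))"
  proof (rule period_half)
    have nz: "\<forall>u\<in>{-1..1}. sqrt (P1 D u * P2 D u) \<noteq> 0"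
    proof
      fix u :: real assume "u \<in> {-1..1}"
      then have "P1 D u > 0" "P2 D u > 0" using P1_pos[OF D] P2_pos[OF D] by auto
      then show "sqrt (P1 D u * P2 D u) \<noteq> 0" by simp
    qed
    have "continuous_on {-1..1} (\<lambda>u. 1 / sqrt (P1 D u * P2 D u))"
      using nz unfolding P1_def P2_def by (intro continuous_intros) auto
    then show "continuous_on {-1..1} (Hf D)" unfolding Hf_def[abs_def] .
  qed
  finally show "cross_energy D = 8 * pi * integral {0..pi} (\<lambda>t. Hf D (cos t))"
    unfolding cross_energy_def by simp
qed

lemma P1_x:
  fixes D s :: real
  assumes "2 + D * s \<noteq> 0"
  shows "P1 D ((- (2 * s) - D) / (2 + D * s)) = (2 - D) * (2 - (D\<^sup>2 - 2) * s) / (2 + D * s)"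
  using assms unfolding P1_def by (simp add: field_simps) algebra

lemma P2_x:
  fixes D s :: real
  assumes "2 + D * s \<noteq> 0"
  shows "P2 D ((- (2 * s) - D) / (2 + D * s)) = (2 + D) * (2 + (D\<^sup>2 - 2) * s) / (2 + D * s)"
  using assms unfolding P2_def by (simp add: field_simps) algebra

lemma one_minus_x2:
  fixes D s :: real
  assumes "2 + D * s \<noteq> 0"
  shows "1 - ((- (2 * s) - D) / (2 + D * s))\<^sup>2 = (4 - D\<^sup>2) * (1 - s\<^sup>2) / (2 + D * s)\<^sup>2"
  using assms by (simp add: field_simps) algebra

lemma gen3: "a > 0 \<Longrightarrow> c > 0 \<Longrightarrow> g > 0 \<Longrightarrow> inverse (- (a * c / g)) * (- (c * a\<^sup>2) / g\<^sup>2) = a / (g::real)"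
  by (simp add: field_simps power2_eq_square)

lemma mobius:
  fixes D :: real
  assumes D: "0 < D" "D < 2"
  shows "integral {0..pi} (\<lambda>t. Hf D (cos t)) = integral {-(pi/2)..pi/2} (\<lambda>y. 1 / sqrt (4 - (D\<^sup>2 - 2)\<^sup>2 * (sin y)\<^sup>2))"
proof -
  have DD: "D\<^sup>2 < 4" using mult_strict_mono[of D 2 D 2] D by (simp add: power2_eq_square)
  have DD0: "D\<^sup>2 > 0" using D by simp
  define xf where "xf y = (- (2 * sin y) - D) / (2 + D * sin y)" for y
  define g where "g y = arccos (xf y)" for y
  define a where "a = sqrt (4 - D\<^sup>2)"
  define g' where "g' y = a / (2 + D * sin y)" for y
  have a0: "a > 0" unfolding a_def using DD by simp
  have aa: "a\<^sup>2 = 4 - D\<^sup>2" unfolding a_def using DD by simp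
  have gp: "2 + D * sin y > 0" for y
  proof -
    have "D * sin y \<ge> D * (-1)" using D by (intro mult_left_mono) auto
    then show ?thesis using D by linarith
  qed
  have omx: "1 - (xf y)\<^sup>2 = (a * cos y / (2 + D * sin y))\<^sup>2" for y
  proof -
    have "1 - (xf y)\<^sup>2 = (4 - D\<^sup>2) * (1 - (sin y)\<^sup>2) / (2 + D * sin y)\<^sup>2"
      unfolding xf_def by (rule one_minus_x2) (use gp[of y] in simp)
    also have "\<dots> = (a * cos y / (2 + D * sin y))\<^sup>2"
      by (simp add: aa power_divide power_mult_distrib cos_squared_eq)
    finally show ?thesis .
  qed
  have xb: "-1 \<le> xf y \<and> xf y \<le> 1" for y
  proof -
    have "(xf y)\<^sup>2 \<le> 1" using omx[of y] by (smt (verit) zero_le_power2)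
    then show ?thesis by (simp add: abs_square_le_1 abs_le_iff)
  qed
  have xs: "-1 < xf y \<and> xf y < 1" if "y \<in> {-(pi/2)<..<pi/2}" for y
  proof -
    have "cos y > 0" using that by (auto intro!: cos_gt_zero_pi)
    then have "(a * cos y / (2 + D * sin y))\<^sup>2 > 0" using a0 gp[of y] by simp
    then have "(xf y)\<^sup>2 < 1" using omx[of y] by linarith
    then show ?thesis by (simp add: abs_square_less_1 abs_less_iff)
  qed
  have dx: "(xf has_real_derivative (- (cos y * (4 - D\<^sup>2))) / (2 + D * sin y)\<^sup>2) (at y)" for y
  proof -
    have "((\<lambda>y. (- (2 * sin y) - D) / (2 + D * sin y)) has_real_derivative
       ((- (2 * cos y)) * (2 + D * sin y) - (D * cos y) * (- (2 * sin y) - D)) / (2 + D * sin y) ^ Suc (Suc 0)) (at y)"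
      by (rule DERIV_quotient) (auto intro!: derivative_eq_intros simp: gp[of y, THEN less_imp_neq, symmetric])
    then have "((\<lambda>y. (- (2 * sin y) - D) / (2 + D * sin y)) has_real_derivative
       ((- (2 * cos y)) * (2 + D * sin y) - (D * cos y) * (- (2 * sin y) - D)) / (2 + D * sin y)\<^sup>2) (at y)"
      by (simp add: numeral_2_eq_2)
    moreover have "(- (2 * cos y)) * (2 + D * sin y) - (D * cos y) * (- (2 * sin y) - D) = - (cos y * (4 - D\<^sup>2))"
      by algebra
    ultimately show ?thesis unfolding xf_def[abs_def] by simp
  qed
  have dg: "(g has_field_derivative g' y) (at y within {-(pi/2)..pi/2})" if "y \<in> {-(pi/2)..pi/2} - {-(pi/2), pi/2}" for y
  proof -
    have yi: "y \<in> {-(pi/2)<..<pi/2}" using that by auto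
    have cy: "cos y > 0" using yi by (auto intro!: cos_gt_zero_pi)
    have "(g has_real_derivative inverse (- sqrt (1 - (xf y)\<^sup>2)) * ((- (cos y * (4 - D\<^sup>2))) / (2 + D * sin y)\<^sup>2)) (at y)"
      unfolding g_def[abs_def] using xs[OF yi] by (intro DERIV_chain2[OF DERIV_arccos dx]) auto
    moreover have "sqrt (1 - (xf y)\<^sup>2) = a * cos y / (2 + D * sin y)"
      unfolding omx using a0 cy gp[of y] by simp
    moreover have "inverse (- (a * cos y / (2 + D * sin y))) * ((- (cos y * (4 - D\<^sup>2))) / (2 + D * sin y)\<^sup>2) = g' y"
      unfolding g'_def aa[symmetric] using a0 cy gp[of y] by (rule gen3)
    ultimately show ?thesis by (simp add: has_field_derivative_at_within)
  qed
  have m1: "(- 2 - D) / (2 + D) = -1"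
  proof -
    have "2 + D \<noteq> 0" using D by simp
    then show ?thesis by (simp add: field_simps)
  qed
  have gm: "g (-(pi/2)) = 0" "g (pi/2) = pi" unfolding g_def xf_def using D m1 by simp_all
  have Hcont: "continuous_on {0..pi} (\<lambda>t. Hf D (cos t))"
  proof -
    have nz: "\<forall>t\<in>{0..pi}. sqrt (P1 D (cos t) * P2 D (cos t)) \<noteq> 0"
    proof
      fix t :: real assume "t \<in> {0..pi}"
      have "P1 D (cos t) > 0" "P2 D (cos t) > 0" using P1_pos[OF D] P2_pos[OF D] by auto
      then show "sqrt (P1 D (cos t) * P2 D (cos t)) \<noteq> 0" by simp
    qed
    show ?thesis using nz unfolding Hf_def P1_def P2_def by (intro continuous_intros) auto
  qed
  have sub: "((\<lambda>y. g' y *\<^sub>R Hf D (cos (g y))) has_integral integral {g (-(pi/2))..g (pi/2)} (\<lambda>t. Hf D (cos t))) {-(pi/2)..pi/2}"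
  proof (rule has_integral_substitution_strong[where s="{-(pi/2), pi/2}" and c=0 and d=pi])
    show "g ` {-(pi/2)..pi/2} \<subseteq> {0..pi}" unfolding g_def using xb by (auto intro!: arccos_lbound arccos_ubound)
    show "continuous_on {-(pi/2)..pi/2} g" unfolding g_def xf_def using xb[unfolded xf_def] gp
      by (intro continuous_intros) (auto simp: less_imp_neq[symmetric])
  qed (use gm Hcont dg in auto)
  have pt: "g' y *\<^sub>R Hf D (cos (g y)) = 1 / sqrt (4 - (D\<^sup>2 - 2)\<^sup>2 * (sin y)\<^sup>2)" for y
  proof -
    have cg: "cos (g y) = xf y" unfolding g_def using xb[of y] by simp
    have g0: "2 + D * sin y \<noteq> 0" using gp[of y] by simp
    have q: "4 - (D\<^sup>2 - 2)\<^sup>2 * (sin y)\<^sup>2 \<ge> 0"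
    proof -
      have "(D\<^sup>2 - 2)\<^sup>2 \<le> 4" using DD DD0 abs_square_le_1[of "(D\<^sup>2 - 2)/2"] by (simp add: power_divide abs_le_iff)
      moreover have "(sin y)\<^sup>2 \<le> 1" using abs_sin_le_one[of y] abs_square_le_1 by blast
      ultimately have "(D\<^sup>2 - 2)\<^sup>2 * (sin y)\<^sup>2 \<le> 4 * 1" by (intro mult_mono) auto
      then show ?thesis by simp
    qed
    have "P1 D (xf y) * P2 D (xf y) = (a * sqrt (4 - (D\<^sup>2 - 2)\<^sup>2 * (sin y)\<^sup>2) / (2 + D * sin y))\<^sup>2"
    proof -
      have idt: "(2 - D) * (2 - (D\<^sup>2 - 2) * sin y) * ((2 + D) * (2 + (D\<^sup>2 - 2) * sin y)) = (4 - D\<^sup>2) * (4 - (D\<^sup>2 - 2)\<^sup>2 * (sin y)\<^sup>2)"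
        by algebra
      have "P1 D (xf y) * P2 D (xf y) = (2 - D) * (2 - (D\<^sup>2 - 2) * sin y) / (2 + D * sin y) * ((2 + D) * (2 + (D\<^sup>2 - 2) * sin y) / (2 + D * sin y))"
        unfolding xf_def using P1_x[OF g0] P2_x[OF g0] by simp
      also have "\<dots> = ((2 - D) * (2 - (D\<^sup>2 - 2) * sin y) * ((2 + D) * (2 + (D\<^sup>2 - 2) * sin y))) / (2 + D * sin y)\<^sup>2"
        by (simp add: power2_eq_square)
      also have "\<dots> = (4 - D\<^sup>2) * (4 - (D\<^sup>2 - 2)\<^sup>2 * (sin y)\<^sup>2) / (2 + D * sin y)\<^sup>2"
        by (simp only: idt)
      also have "\<dots> = (a * sqrt (4 - (D\<^sup>2 - 2)\<^sup>2 * (sin y)\<^sup>2) / (2 + D * sin y))\<^sup>2"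
        using q by (simp add: aa power_divide power_mult_distrib)
      finally show ?thesis .
    qed
    then have "sqrt (P1 D (xf y) * P2 D (xf y)) = a * sqrt (4 - (D\<^sup>2 - 2)\<^sup>2 * (sin y)\<^sup>2) / (2 + D * sin y)"
      using a0 gp[of y] q by simp
    then show ?thesis unfolding cg Hf_def g'_def using a0 g0 by simp
  qed
  show ?thesis using sub unfolding pt gm by (simp add: integral_unique)
qed

lemma gen4: "a > 0 \<Longrightarrow> c > 0 \<Longrightarrow> n > 0 \<Longrightarrow> inverse (c * r / n) * (k * c * m / n\<^sup>2) = k * m / (n * (r::real))"
  by (simp add: field_simps power2_eq_square)

lemma Fden_pos:
  fixes p S :: real
  assumes p: "-2 < p" "p < 2" and S: "0 \<le> S" "S \<le> 1"
  shows "(2 - p)\<^sup>2 + 8 * p * S > 0"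
proof (cases "p \<ge> 0")
  case True
  then have "8 * p * S \<ge> 0" using S by simp
  moreover have "(2 - p)\<^sup>2 > 0" using p by simp
  ultimately show ?thesis by linarith
next
  case False
  then have "8 * p * S \<ge> 8 * p" using S by (simp add: mult_left_mono_neg)
  moreover have "(2 - p)\<^sup>2 + 8 * p = (2 + p)\<^sup>2" by algebra
  moreover have "(2 + p)\<^sup>2 > 0" using p by simp
  ultimately show ?thesis by linarith
qed

lemma gauss:
  fixes p :: real
  assumes p: "-2 < p" "p < 2"
  shows "integral {-(pi/2)..pi/2} (\<lambda>y. 1 / sqrt (4 - p\<^sup>2 * (sin y)\<^sup>2))
       = integral {-(pi/2)..pi/2} (\<lambda>t. 1 / sqrt ((2 - p)\<^sup>2 + 8 * p * (sin t)\<^sup>2))"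
proof -
  have S01: "0 \<le> (sin y)\<^sup>2" "(sin y)\<^sup>2 \<le> 1" for y :: real
    by (simp_all add: abs_square_le_1)
  have pS: "-2 < p * (sin y)\<^sup>2 \<and> p * (sin y)\<^sup>2 < 2" for y :: real
  proof (cases "p \<ge> 0")
    case True
    have "p * (sin y)\<^sup>2 \<le> p * 1" using True S01[of y] by (intro mult_left_mono) auto
    moreover have "p * (sin y)\<^sup>2 \<ge> 0" using True by simp
    ultimately show ?thesis using p by linarith
  next
    case False
    have "p * (sin y)\<^sup>2 \<ge> p * 1" using False S01[of y] by (intro mult_left_mono_neg) auto
    moreover have "p * (sin y)\<^sup>2 \<le> 0" using False by (simp add: mult_nonpos_nonneg)
    ultimately show ?thesis using p by linarith
  qed
  have Np: "2 - p * (sin y)\<^sup>2 > 0" and Mp: "2 + p * (sin y)\<^sup>2 > 0" for y :: real using pS[of y] by auto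
  have p2: "p\<^sup>2 < 4" using p abs_square_less_1[of "p/2"] by (simp add: power_divide abs_less_iff)
  have Rp: "4 - p\<^sup>2 * (sin y)\<^sup>2 > 0" for y :: real
  proof -
    have "p\<^sup>2 * (sin y)\<^sup>2 \<le> p\<^sup>2 * 1" using S01[of y] by (intro mult_left_mono) auto
    then show ?thesis using p2 by linarith
  qed
  have pp: "2 - p > 0" using p by simp
  define yf where "yf y = (2 - p) * sin y / (2 - p * (sin y)\<^sup>2)" for y :: real
  define g where "g y = arcsin (yf y)" for y :: real
  define g' where "g' y = (2 - p) * (2 + p * (sin y)\<^sup>2) / ((2 - p * (sin y)\<^sup>2) * sqrt (4 - p\<^sup>2 * (sin y)\<^sup>2))" for y :: real
  have idN: "(2 - p * S)\<^sup>2 - (2 - p)\<^sup>2 * S = (1 - S) * (4 - p\<^sup>2 * S)" for S by algebra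
  have omy: "1 - (yf y)\<^sup>2 = (cos y * sqrt (4 - p\<^sup>2 * (sin y)\<^sup>2) / (2 - p * (sin y)\<^sup>2))\<^sup>2" for y :: real
  proof -
    have n0: "2 - p * (sin y)\<^sup>2 \<noteq> 0" using Np[of y] by simp
    have "1 - (yf y)\<^sup>2 = ((2 - p * (sin y)\<^sup>2)\<^sup>2 - (2 - p)\<^sup>2 * (sin y)\<^sup>2) / (2 - p * (sin y)\<^sup>2)\<^sup>2"
      unfolding yf_def using n0 by (simp add: power_divide power_mult_distrib field_simps) (simp add: power2_eq_square algebra_simps)
    also have "\<dots> = (1 - (sin y)\<^sup>2) * (4 - p\<^sup>2 * (sin y)\<^sup>2) / (2 - p * (sin y)\<^sup>2)\<^sup>2"
      by (simp only: idN)
    also have "\<dots> = (cos y * sqrt (4 - p\<^sup>2 * (sin y)\<^sup>2) / (2 - p * (sin y)\<^sup>2))\<^sup>2"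
      using Rp[of y] by (simp add: power_divide power_mult_distrib cos_squared_eq)
    finally show ?thesis .
  qed
  have yb: "-1 \<le> yf y \<and> yf y \<le> 1" for y :: real
  proof -
    have "(yf y)\<^sup>2 \<le> 1" using omy[of y] by (smt (verit) zero_le_power2)
    then show ?thesis by (simp add: abs_square_le_1 abs_le_iff)
  qed
  have ys: "-1 < yf y \<and> yf y < 1" if "y \<in> {-(pi/2)<..<pi/2}" for y :: real
  proof -
    have "cos y > 0" using that by (auto intro!: cos_gt_zero_pi)
    then have "(cos y * sqrt (4 - p\<^sup>2 * (sin y)\<^sup>2) / (2 - p * (sin y)\<^sup>2))\<^sup>2 > 0" using Rp[of y] Np[of y] by simp
    then have "(yf y)\<^sup>2 < 1" using omy[of y] by linarith
    then show ?thesis by (simp add: abs_square_less_1 abs_less_iff)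
  qed
  have dy: "(yf has_real_derivative (2 - p) * cos y * (2 + p * (sin y)\<^sup>2) / (2 - p * (sin y)\<^sup>2)\<^sup>2) (at y)" for y :: real
  proof -
    have "((\<lambda>y. (2 - p) * sin y / (2 - p * (sin y)\<^sup>2)) has_real_derivative
       (((2 - p) * cos y) * (2 - p * (sin y)\<^sup>2) - (- (p * (2 * sin y * cos y))) * ((2 - p) * sin y)) / (2 - p * (sin y)\<^sup>2) ^ Suc (Suc 0)) (at y)"
      by (rule DERIV_quotient) (use Np[of y] in \<open>auto intro!: derivative_eq_intros\<close>)
    moreover have "(((2 - p) * cos y) * (2 - p * (sin y)\<^sup>2) - (- (p * (2 * sin y * cos y))) * ((2 - p) * sin y))
        = (2 - p) * cos y * (2 + p * (sin y)\<^sup>2)"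
      by algebra
    ultimately show ?thesis unfolding yf_def[abs_def] by (simp add: numeral_2_eq_2)
  qed
  have dg: "(g has_field_derivative g' y) (at y within {-(pi/2)..pi/2})" if "y \<in> {-(pi/2)..pi/2} - {-(pi/2), pi/2}" for y :: real
  proof -
    have yi: "y \<in> {-(pi/2)<..<pi/2}" using that by auto
    have cy: "cos y > 0" using yi by (auto intro!: cos_gt_zero_pi)
    have "(g has_real_derivative inverse (sqrt (1 - (yf y)\<^sup>2)) * ((2 - p) * cos y * (2 + p * (sin y)\<^sup>2) / (2 - p * (sin y)\<^sup>2)\<^sup>2)) (at y)"
      unfolding g_def[abs_def] using ys[OF yi] by (intro DERIV_chain2[OF DERIV_arcsin dy]) auto
    moreover have "sqrt (1 - (yf y)\<^sup>2) = cos y * sqrt (4 - p\<^sup>2 * (sin y)\<^sup>2) / (2 - p * (sin y)\<^sup>2)"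
      unfolding omy using Rp[of y] cy Np[of y] by simp
    moreover have "inverse (cos y * sqrt (4 - p\<^sup>2 * (sin y)\<^sup>2) / (2 - p * (sin y)\<^sup>2)) * ((2 - p) * cos y * (2 + p * (sin y)\<^sup>2) / (2 - p * (sin y)\<^sup>2)\<^sup>2) = g' y"
      unfolding g'_def using cy Np[of y] Rp[of y] by (intro gen4[where a=1]) auto
    ultimately show ?thesis by (simp add: has_field_derivative_at_within)
  qed
  have m1: "(p - 2) / (2 - p) = -1"
  proof -
    have "2 - p \<noteq> 0" using pp by simp
    then show ?thesis by (simp add: field_simps)
  qed
  have gm: "g (-(pi/2)) = -(pi/2)" "g (pi/2) = pi/2" unfolding g_def yf_def using pp m1 by simp_all
  have Fcont: "continuous_on {-(pi/2)..pi/2} (\<lambda>t. 1 / sqrt ((2 - p)\<^sup>2 + 8 * p * (sin t)\<^sup>2))"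
  proof -
    have nz: "\<forall>t\<in>{-(pi/2)..pi/2}. sqrt ((2 - p)\<^sup>2 + 8 * p * (sin t)\<^sup>2) \<noteq> 0"
      using Fden_pos[OF p S01] by (simp add: less_imp_neq[symmetric])
    show ?thesis using nz by (intro continuous_intros) auto
  qed
  have sub: "((\<lambda>y. g' y *\<^sub>R (1 / sqrt ((2 - p)\<^sup>2 + 8 * p * (sin (g y))\<^sup>2))) has_integral
      integral {g (-(pi/2))..g (pi/2)} (\<lambda>t. 1 / sqrt ((2 - p)\<^sup>2 + 8 * p * (sin t)\<^sup>2))) {-(pi/2)..pi/2}"
  proof (rule has_integral_substitution_strong[where s="{-(pi/2), pi/2}" and c="-(pi/2)" and d="pi/2"])
    show "g ` {-(pi/2)..pi/2} \<subseteq> {-(pi/2)..pi/2}" unfolding g_def using yb arcsin_bounded by fastforce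
    show "continuous_on {-(pi/2)..pi/2} g" unfolding g_def yf_def using yb[unfolded yf_def] Np
      by (intro continuous_intros) (auto simp: less_imp_neq[symmetric])
    show "g (-(pi/2)) \<le> g (pi/2)" unfolding gm using pi_gt_zero by linarith
  qed (use gm Fcont dg in auto)
  have pt: "g' y *\<^sub>R (1 / sqrt ((2 - p)\<^sup>2 + 8 * p * (sin (g y))\<^sup>2)) = 1 / sqrt (4 - p\<^sup>2 * (sin y)\<^sup>2)" for y :: real
  proof -
    have sg: "sin (g y) = yf y" unfolding g_def using yb[of y] by simp
    have n0: "2 - p * (sin y)\<^sup>2 \<noteq> 0" using Np[of y] by simp
    have idM: "(2 - p * S)\<^sup>2 + 8 * p * S = (2 + p * S)\<^sup>2" for S by algebra
    have "(2 - p)\<^sup>2 + 8 * p * (yf y)\<^sup>2 = (2 - p)\<^sup>2 * ((2 - p * (sin y)\<^sup>2)\<^sup>2 + 8 * p * (sin y)\<^sup>2) / (2 - p * (sin y)\<^sup>2)\<^sup>2"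
      unfolding yf_def using n0 by (simp add: power_divide power_mult_distrib field_simps) (simp add: power2_eq_square algebra_simps)
    also have "\<dots> = ((2 - p) * (2 + p * (sin y)\<^sup>2) / (2 - p * (sin y)\<^sup>2))\<^sup>2"
      by (simp only: idM power_divide power_mult_distrib)
    finally have "sqrt ((2 - p)\<^sup>2 + 8 * p * (yf y)\<^sup>2) = (2 - p) * (2 + p * (sin y)\<^sup>2) / (2 - p * (sin y)\<^sup>2)"
      using pp Mp[of y] Np[of y] by simp
    then show ?thesis unfolding sg g'_def using pp Mp[of y] Np[of y] Rp[of y] by simp
  qed
  show ?thesis using sub unfolding pt gm by (simp add: integral_unique)
qed

lemma ce_Q:
  fixes D :: real
  assumes D: "0 < D" "D < 2"
  shows "cross_energy D = 8 * pi * integral {-(pi/2)..pi/2} (\<lambda>y. 1 / sqrt (4 - (D\<^sup>2 - 2)\<^sup>2 * (sin y)\<^sup>2))"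
  using cross_energy_H(2)[OF D] mobius[OF D] by simp

lemma p_range:
  fixes D :: real
  assumes D: "0 < D" "D < 2"
  shows "-2 < D\<^sup>2 - 2" "D\<^sup>2 - 2 < 2"
proof -
  have "D\<^sup>2 < 4" using mult_strict_mono[of D 2 D 2] D by (simp add: power2_eq_square)
  moreover have "D\<^sup>2 > 0" using D by simp
  ultimately show "-2 < D\<^sup>2 - 2" "D\<^sup>2 - 2 < 2" by auto
qed

lemma ce_K:
  fixes D :: real
  assumes D: "0 < D" "D < 2"
  shows "cross_energy D = 16 * pi / (4 - D\<^sup>2) * ellipK (- 8 * (D\<^sup>2 - 2) / (D\<^sup>2 - 4)\<^sup>2)"
proof -
  define p where "p = D\<^sup>2 - 2"
  have p: "-2 < p" "p < 2" unfolding p_def using p_range[OF D] by auto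
  define F where "F t = 1 / sqrt ((2 - p)\<^sup>2 + 8 * p * (sin t)\<^sup>2)" for t :: real
  have S01: "0 \<le> (sin y)\<^sup>2" "(sin y)\<^sup>2 \<le> 1" for y :: real
    by (simp_all add: abs_square_le_1)
  have Fc: "continuous_on {-(pi/2)..pi/2} F"
  proof -
    have nz: "\<forall>t\<in>{-(pi/2)..pi/2}. sqrt ((2 - p)\<^sup>2 + 8 * p * (sin t)\<^sup>2) \<noteq> 0"
      using Fden_pos[OF p S01] by (simp add: less_imp_neq[symmetric])
    show ?thesis unfolding F_def[abs_def] using nz by (intro continuous_intros) auto
  qed
  have "cross_energy D = 8 * pi * integral {-(pi/2)..pi/2} F"
    using ce_Q[OF D] gauss[OF p] unfolding p_def F_def by simp
  also have "integral {-(pi/2)..pi/2} F = 2 * integral {0..pi/2} F"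
    using even_half[OF _ _ , of "pi/2" F] Fc unfolding F_def by simp
  finally have ce: "cross_energy D = 16 * pi * integral {0..pi/2} F" by simp
  have pp: "2 - p > 0" using p by simp
  have mm: "- 8 * (D\<^sup>2 - 2) / (D\<^sup>2 - 4)\<^sup>2 = - 8 * p / (2 - p)\<^sup>2"
    unfolding p_def by (simp add: power2_eq_square algebra_simps)
  have pt: "1 / sqrt (1 - (- 8 * p / (2 - p)\<^sup>2) * (sin t)\<^sup>2) = (2 - p) * F t" for t
  proof -
    have pos: "(2 - p)\<^sup>2 + 8 * p * (sin t)\<^sup>2 > 0" using Fden_pos[OF p S01] by simp
    have "1 - (- 8 * p / (2 - p)\<^sup>2) * (sin t)\<^sup>2 = ((2 - p)\<^sup>2 + 8 * p * (sin t)\<^sup>2) / (2 - p)\<^sup>2"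
      using pp by (simp add: field_simps)
    then have "sqrt (1 - (- 8 * p / (2 - p)\<^sup>2) * (sin t)\<^sup>2) = sqrt ((2 - p)\<^sup>2 + 8 * p * (sin t)\<^sup>2) / (2 - p)"
      using pp by (simp add: real_sqrt_divide)
    then show ?thesis unfolding F_def using pp pos by simp
  qed
  have "ellipK (- 8 * (D\<^sup>2 - 2) / (D\<^sup>2 - 4)\<^sup>2) = integral {0..pi/2} (\<lambda>t. (2 - p) * F t)"
    unfolding ellipK_def mm pt by simp
  also have "\<dots> = (2 - p) * integral {0..pi/2} F" by simp
  finally have K: "ellipK (- 8 * (D\<^sup>2 - 2) / (D\<^sup>2 - 4)\<^sup>2) = (2 - p) * integral {0..pi/2} F" .
  have e: "4 - D\<^sup>2 = 2 - p" unfolding p_def by simp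
  show ?thesis unfolding ce K e using pp by simp
qed

lemma m_lt1:
  fixes D :: real
  assumes D: "0 < D" "D < 2"
  shows "- 8 * (D\<^sup>2 - 2) / (D\<^sup>2 - 4)\<^sup>2 < 1"
proof -
  define p where "p = D\<^sup>2 - 2"
  have p: "-2 < p" "p < 2" unfolding p_def using p_range[OF D] by auto
  have mm: "- 8 * (D\<^sup>2 - 2) / (D\<^sup>2 - 4)\<^sup>2 = - 8 * p / (2 - p)\<^sup>2"
    unfolding p_def by (simp add: power2_eq_square algebra_simps)
  have pp: "(2 - p)\<^sup>2 > 0" using p by simp
  have "- 8 * p < (2 - p)\<^sup>2"
  proof -
    have "(2 - p)\<^sup>2 + 8 * p = (2 + p)\<^sup>2" by algebra
    moreover have "(2 + p)\<^sup>2 > 0" using p by simp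
    ultimately show ?thesis by linarith
  qed
  then show ?thesis unfolding mm using pp by (simp only: pos_divide_less_eq)
qed

lemma ce_lower:
  fixes D :: real
  assumes D: "0 < D" "D < 2"
  shows "4 * pi\<^sup>2 \<le> cross_energy D"
proof -
  define q where "q = (D\<^sup>2 - 2)\<^sup>2"
  have q: "0 \<le> q" "q < 4" unfolding q_def using p_range[OF D] abs_square_less_1[of "(D\<^sup>2 - 2)/2"]
    by (auto simp: power_divide abs_less_iff)
  have S01: "0 \<le> (sin y)\<^sup>2" "(sin y)\<^sup>2 \<le> 1" for y :: real
    by (simp_all add: abs_square_le_1)
  have R: "0 < 4 - q * (sin y)\<^sup>2 \<and> 4 - q * (sin y)\<^sup>2 \<le> 4" for y
  proof -
    have "q * (sin y)\<^sup>2 \<le> q * 1" using S01[of y] q by (intro mult_left_mono) auto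
    moreover have "q * (sin y)\<^sup>2 \<ge> 0" using q by simp
    ultimately show ?thesis using q by linarith
  qed
  have cont: "continuous_on {-(pi/2)..pi/2} (\<lambda>y. 1 / sqrt (4 - q * (sin y)\<^sup>2))"
    using R by (intro continuous_intros) (auto simp: less_imp_neq[symmetric])
  have le: "1/2 \<le> 1 / sqrt (4 - q * (sin y)\<^sup>2)" for y
  proof -
    have "sqrt (4 - q * (sin y)\<^sup>2) \<le> sqrt 4" using R[of y] by (simp only: real_sqrt_le_iff)
    moreover have "sqrt (4::real) = 2" by simp
    moreover have "sqrt (4 - q * (sin y)\<^sup>2) > 0" using R[of y] by simp
    ultimately show ?thesis by (simp add: divide_simps)
  qed
  have "integral {-(pi/2)..pi/2} (\<lambda>y. 1/2) \<le> integral {-(pi/2)..pi/2} (\<lambda>y. 1 / sqrt (4 - q * (sin y)\<^sup>2))"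
    by (rule integral_le) (use le integrable_continuous_interval[OF cont] in auto)
  moreover have "integral {-(pi/2)..pi/2} (\<lambda>y. 1/2 :: real) = pi / 2" by simp
  ultimately have "pi / 2 \<le> integral {-(pi/2)..pi/2} (\<lambda>y. 1 / sqrt (4 - q * (sin y)\<^sup>2))" by simp
  then have "8 * pi * (pi / 2) \<le> 8 * pi * integral {-(pi/2)..pi/2} (\<lambda>y. 1 / sqrt (4 - q * (sin y)\<^sup>2))"
    by (intro mult_left_mono) auto
  then show ?thesis unfolding ce_Q[OF D] q_def by (simp add: power2_eq_square)
qed

lemma ce_sqrt2: "cross_energy (sqrt 2) = 4 * pi\<^sup>2"
proof -
  have D: "0 < sqrt (2::real)" "sqrt (2::real) < 2" using real_sqrt_less_iff[of 2 4] by auto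
  have "cross_energy (sqrt 2) = 8 * pi * integral {-(pi/2)..pi/2} (\<lambda>y. 1 / sqrt (4 - 0 * (sin y)\<^sup>2))"
    using ce_Q[OF D] by simp
  also have "\<dots> = 8 * pi * integral {-(pi/2)..pi/2} (\<lambda>y. 1 / 2)"
    by (simp add: real_sqrt_four)
  also have "\<dots> = 4 * pi\<^sup>2" by (simp add: power2_eq_square)
  finally show ?thesis .
qed

theorem mainTheorem1:
  shows "(\<forall>D::real. 0 < D \<and> D < 2 \<longrightarrow>
            hopf_integrand D integrable_on ({0..2*pi} \<times> {0..2*pi})
          \<and> - 8 * (D\<^sup>2 - 2) / (D\<^sup>2 - 4)\<^sup>2 < 1
          \<and> cross_energy D = 16 * pi / (4 - D\<^sup>2) * ellipK (- 8 * (D\<^sup>2 - 2) / (D\<^sup>2 - 4)\<^sup>2))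
       \<and> (\<forall>D::real. 0 < D \<and> D < 2 \<longrightarrow> cross_energy (sqrt 2) \<le> cross_energy D)
       \<and> cross_energy (sqrt 2) = 4 * pi\<^sup>2"
  using cross_energy_H(1) m_lt1 ce_K ce_lower ce_sqrt2 by auto

end
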